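(* Let $\mathsf{u},\mathsf{v}\in V$ be consistently oriented spacelike vectors, let $p\in E$ and $\mathsf{w}\in V$, and suppose the crooked planes $\mathcal{C}(\mathsf{u},p)$ and $\mathcal{C}(\mathsf{v},p+\mathsf{w})$ are disjoint. Then $\mathcal{C}(\mathsf{v},p+\mathsf{w})\subset\mathcal{H}(-\mathsf{u},p)$.
   Context: $V=\mathbb{R}^3$ with Lorentzian inner product $x\cdot y=x_1y_1+x_2y_2-x_3y_3$ and standard orientation; $E$ is the affine space with translation space $V$. Null: $x\cdot x=0$; spacelike: $x\cdot x>0$; future-pointing: third coordinate positive. For spacelike $\mathsf{v}$, $\mathsf{v}^-,\mathsf{v}^+$ are the two future-pointing null vectors of Euclidean length $1$ in $\mathsf{v}^\perp$, labelled so that $(\mathsf{v}^-,\mathsf{v}^+,\mathsf{v})$ is positively oriented. For null $x$, $\mathcal{P}(x)$ is the set of spacelike $w\in x^\perp$ with $w^+$ a positive multiple of $x$. The crooked plane $\mathcal{C}(\mathsf{v},p)=(p+\mathcal{P}(\mathsf{v}^+))\cup(p+\mathcal{P}(\mathsf{v}^-))\cup(p+\{x:\mathsf{v}\cdot x=0,\ x\cdot x\le0\})$. The crooked half-space $\mathcal{H}(\mathsf{v},p)$ is the set of $q\in E$ with $(q-p)\cdot\mathsf{v}^+\le0$ if $(q-p)\cdot\mathsf{v}\ge0$, and $(q-p)\cdot\mathsf{v}^-\ge0$ if $(q-p)\cdot\mathsf{v}\le0$ (both when $(q-p)\cdot\mathsf{v}=0$). Spacelike vectors $\mathsf{v}_1,\dots,\mathsf{v}_n$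 are consistently oriented if for all $i\ne j$: $\mathsf{v}_i\cdot\mathsf{v}_j<0$, $\mathsf{v}_i\cdot\mathsf{v}_j^+\le0$ and $\mathsf{v}_i\cdot\mathsf{v}_j^-\le0$. *)

theory Defs
  imports "HOL-Analysis.Analysis"
begin

text \<open>Minkowski space V = R^3 with Lorentzian inner product; E identified with V (points as real^3).\<close>

definition lprod :: "real^3 \<Rightarrow> real^3 \<Rightarrow> real" where
  "lprod x y = x$1 * y$1 + x$2 * y$2 - x$3 * y$3"

definition is_null :: "real^3 \<Rightarrow> bool" where
  "is_null x \<longleftrightarrow> lprod x x = 0"

definition spacelike :: "real^3 \<Rightarrow> bool" where
  "spacelike x \<longleftrightarrow> lprod x x > 0"

definition future_pointing :: "real^3 \<Rightarrow> bool" where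
  "future_pointing x \<longleftrightarrow> x$3 > 0"

definition pos_oriented :: "real^3 \<Rightarrow> real^3 \<Rightarrow> real^3 \<Rightarrow> bool" where
  "pos_oriented a b c \<longleftrightarrow> det (transpose (vector [a, b, c] :: real^3^3)) > 0"

definition null_frame_cond :: "real^3 \<Rightarrow> real^3 \<Rightarrow> bool" where
  "null_frame_cond v x \<longleftrightarrow> is_null x \<and> future_pointing x \<and> norm x = 1 \<and> lprod v x = 0"

definition null_pair :: "real^3 \<Rightarrow> (real^3) \<times> (real^3)" where
  "null_pair v = (THE (a, b). null_frame_cond v a \<and> null_frame_cond v b \<and> pos_oriented a b v)"

definition vminus :: "real^3 \<Rightarrow> real^3" where
  "vminus v = fst (null_pair v)"

definition vplus :: "real^3 \<Rightarrow> real^3" where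
  "vplus v = snd (null_pair v)"

definition Pset :: "real^3 \<Rightarrow> (real^3) set" where
  "Pset x = {w. spacelike w \<and> lprod x w = 0 \<and> (\<exists>c>0. vplus w = c *\<^sub>R x)}"

definition crooked_plane :: "real^3 \<Rightarrow> real^3 \<Rightarrow> (real^3) set" where
  "crooked_plane v p =
     ((\<lambda>w. p + w) ` Pset (vplus v)) \<union> ((\<lambda>w. p + w) ` Pset (vminus v)) \<union>
     ((\<lambda>x. p + x) ` {x. lprod v x = 0 \<and> lprod x x \<le> 0})"

definition crooked_halfspace :: "real^3 \<Rightarrow> real^3 \<Rightarrow> (real^3) set" where
  "crooked_halfspace v p = {q.
     (lprod (q - p) v \<ge> 0 \<longrightarrow> lprod (q - p) (vplus v) \<le> 0) \<and>
     (lprod (q - p) v \<le> 0 \<longrightarrow> lprod (q - p) (vminus v) \<ge> 0)}"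

definition consistently_oriented :: "(real^3) list \<Rightarrow> bool" where
  "consistently_oriented vs \<longleftrightarrow> (\<forall>v\<in>set vs. spacelike v) \<and>
     (\<forall>i<length vs. \<forall>j<length vs. i \<noteq> j \<longrightarrow>
        lprod (vs!i) (vs!j) < 0 \<and> lprod (vs!i) (vplus (vs!j)) \<le> 0 \<and>
        lprod (vs!i) (vminus (vs!j)) \<le> 0)"

end

theory Submission
  imports Defs
begin


lemma inner3: "inner (x::real^3) y = x$1*y$1 + x$2*y$2 + x$3*y$3"
  by (simp add: inner_vec_def sum_3)

lemma norm3: "norm (x::real^3) = sqrt (x$1^2 + x$2^2 + x$3^2)"
  by (simp add: norm_eq_sqrt_inner inner3 power2_eq_square)

lemma vec3_eq: "(x::real^3) = y \<longleftrightarrow> x$1 = y$1 \<and> x$2 = y$2 \<and> x$3 = y$3"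
  by (simp add: vec_eq_iff forall_3)

definition trip :: "real^3 \<Rightarrow> real^3 \<Rightarrow> real^3 \<Rightarrow> real" where
  "trip a b c = a$1*b$2*c$3 + a$2*b$3*c$1 + a$3*b$1*c$2 - a$1*b$3*c$2 - a$2*b$1*c$3 - a$3*b$2*c$1"

lemma pos_oriented_trip: "pos_oriented a b c \<longleftrightarrow> trip a b c > 0"
  unfolding pos_oriented_def by (simp add: det_3 transpose_def trip_def algebra_simps)

lemma lprod_comm: "lprod x y = lprod y x" by (simp add: lprod_def algebra_simps)
lemma lprod_add_left[simp]: "lprod (x + y) z = lprod x z + lprod y z" by (simp add: lprod_def algebra_simps)
lemma lprod_add_right[simp]: "lprod z (x + y) = lprod z x + lprod z y" by (simp add: lprod_def algebra_simps)
lemma lprod_diff_left[simp]: "lprod (x - y) z = lprod x z - lprod y z" by (simp add: lprod_def algebra_simps)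
lemma lprod_diff_right[simp]: "lprod z (x - y) = lprod z x - lprod z y" by (simp add: lprod_def algebra_simps)
lemma lprod_scale_left[simp]: "lprod (c *\<^sub>R x) z = c * lprod x z" by (simp add: lprod_def algebra_simps)
lemma lprod_scale_right[simp]: "lprod z (c *\<^sub>R x) = c * lprod z x" by (simp add: lprod_def algebra_simps)
lemma lprod_neg_left[simp]: "lprod (- x) z = - lprod x z" by (simp add: lprod_def algebra_simps)
lemma lprod_neg_right[simp]: "lprod z (- x) = - lprod z x" by (simp add: lprod_def algebra_simps)
lemma lprod_zero[simp]: "lprod 0 z = 0" "lprod z 0 = 0" by (simp_all add: lprod_def)

lemma trip_lin1: "trip (a *\<^sub>R x + b *\<^sub>R y + c *\<^sub>R z) p q = a * trip x p q + b * trip y p q + c * trip z p q"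
  by (simp add: trip_def algebra_simps)
lemma trip_lin2: "trip p (a *\<^sub>R x + b *\<^sub>R y + c *\<^sub>R z) q = a * trip p x q + b * trip p y q + c * trip p z q"
  by (simp add: trip_def algebra_simps)
lemma trip_lin3: "trip p q (a *\<^sub>R x + b *\<^sub>R y + c *\<^sub>R z) = a * trip p q x + b * trip p q y + c * trip p q z"
  by (simp add: trip_def algebra_simps)
lemma trip_swap12: "trip b a c = - trip a b c" by (simp add: trip_def algebra_simps)
lemma trip_rep: "trip a a c = 0" "trip a b a = 0" "trip a b b = 0" by (simp_all add: trip_def algebra_simps)
lemma trip_scale3: "trip a b (c *\<^sub>R x) = c * trip a b x" by (simp add: trip_def algebra_simps)

lemma nfc_iff: "null_frame_cond v x \<longleftrightarrow>
   x$1^2 + x$2^2 = x$3^2 \<and> x$3 > 0 \<and> x$1^2 + x$2^2 + x$3^2 = 1 \<and> lprod v x = 0"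
  by (auto simp: null_frame_cond_def is_null_def future_pointing_def norm3 lprod_def power2_eq_square)

lemma fnull_le: assumes "null_frame_cond v a" "null_frame_cond w b" shows "lprod a b \<le> 0"
proof -
  have h: "a$1^2 + a$2^2 = a$3^2" "a$3 > 0" "b$1^2 + b$2^2 = b$3^2" "b$3 > 0"
    using assms by (auto simp: nfc_iff)
  have "(a$1*b$1 + a$2*b$2)^2 \<le> (a$3*b$3)^2"
  proof -
    have "(a$1*b$1 + a$2*b$2)^2 + (a$1*b$2 - a$2*b$1)^2 = (a$1^2+a$2^2)*(b$1^2+b$2^2)"
      by (simp add: algebra_simps power2_eq_square)
    also have "\<dots> = (a$3*b$3)^2" using h by (simp add: power_mult_distrib)
    finally show ?thesis by (smt (verit) zero_le_power2)
  qed
  hence "a$1*b$1 + a$2*b$2 \<le> a$3*b$3"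
  proof -
    have "\<bar>a$1*b$1 + a$2*b$2\<bar> \<le> \<bar>a$3*b$3\<bar>" using \<open>_ \<le> _\<close> abs_le_square_iff by blast
    thus ?thesis using h by (smt (verit) mult_pos_pos)
  qed
  thus ?thesis by (simp add: lprod_def)
qed

lemma fnull_eq: assumes "null_frame_cond v a" "null_frame_cond w b" "lprod a b = 0" shows "a = b"
proof -
  have h: "a$1^2 + a$2^2 = a$3^2" "a$3 > 0" "b$1^2 + b$2^2 = b$3^2" "b$3 > 0"
     "a$1^2 + a$2^2 + a$3^2 = 1" "b$1^2 + b$2^2 + b$3^2 = 1"
    using assms by (auto simp: nfc_iff)
  have e: "a$1*b$1 + a$2*b$2 = a$3*b$3" using assms(3) by (simp add: lprod_def)
  have "(a$1*b$1 + a$2*b$2)^2 + (a$1*b$2 - a$2*b$1)^2 = (a$1^2+a$2^2)*(b$1^2+b$2^2)"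
    by (simp add: algebra_simps power2_eq_square)
  also have "\<dots> = (a$3*b$3)^2" using h by (simp add: power_mult_distrib)
  finally have "(a$1*b$2 - a$2*b$1)^2 = 0" using e by simp
  hence c: "a$1*b$2 = a$2*b$1" by simp
  have "a$3*(a$1*b$3 - a$3*b$1) = a$2*(a$1*b$2 - a$2*b$1)"
    using h(1) e by algebra
  hence c1: "a$1*b$3 = a$3*b$1" using c h(2) by simp
  have "a$3*(a$2*b$3 - a$3*b$2) = - a$1*(a$1*b$2 - a$2*b$1)"
    using h(1) e by algebra
  hence c2: "a$2*b$3 = a$3*b$2" using c h(2) by simp
  have "2*a$3^2 = 1" "2*b$3^2 = 1" using h by auto
  hence "a$3^2 = b$3^2" by simp
  hence a3: "a$3 = b$3" using h(2,4) by (simp add: power2_eq_iff)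
  show ?thesis unfolding vec3_eq using a3 c1 c2 h(2) by auto
qed

lemma fnull_lt: assumes "null_frame_cond v a" "null_frame_cond w b" "a \<noteq> b" shows "lprod a b < 0"
  using fnull_le[OF assms(1,2)] fnull_eq[OF assms(1,2)] assms(3) by fastforce

lemma kernel3: assumes "trip a b w \<noteq> 0" "lprod e a = 0" "lprod e b = 0" "lprod e w = 0" shows "e = 0"
proof -
  let ?D = "trip a b w"
  have "e$1 * ?D = 0" using assms(2-4) unfolding lprod_def trip_def by algebra
  moreover have "e$2 * ?D = 0" using assms(2-4) unfolding lprod_def trip_def by algebra
  moreover have "e$3 * ?D = 0" using assms(2-4) unfolding lprod_def trip_def by algebra
  ultimately show ?thesis using assms(1) by (simp add: vec3_eq)
qed

lemma decomp:
  assumes "lprod a w = 0" "lprod b w = 0" "lprod a a = 0" "lprod b b = 0"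
    "lprod a b \<noteq> 0" "lprod w w \<noteq> 0" "trip a b w \<noteq> 0"
  shows "x = (lprod x b / lprod a b) *\<^sub>R a + (lprod x a / lprod a b) *\<^sub>R b + (lprod x w / lprod w w) *\<^sub>R w"
proof -
  let ?e = "x - ((lprod x b / lprod a b) *\<^sub>R a + (lprod x a / lprod a b) *\<^sub>R b + (lprod x w / lprod w w) *\<^sub>R w)"
  have "?e = 0"
    apply (rule kernel3[OF assms(7)])
    using assms by (auto simp: lprod_comm[of b a] lprod_comm[of w a] lprod_comm[of w b] lprod_comm[of x])
  thus ?thesis by simp
qed

lemma frame_exists:
  assumes "spacelike w"
  shows "\<exists>a b. null_frame_cond w a \<and> null_frame_cond w b \<and> pos_oriented a b w"
proof -
  define r where "r = w$1^2 + w$2^2"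
  define k where "k = sqrt (r - w$3^2)"
  define s where "s = sqrt 2 / 2"
  have sp: "r - w$3^2 > 0" using assms by (simp add: spacelike_def lprod_def r_def power2_eq_square)
  have r0: "r > 0" using sp by (smt (verit) zero_le_power2)
  have k0: "k > 0" using sp by (simp add: k_def)
  have kk: "k^2 = r - w$3^2" using sp by (simp add: k_def)
  have ss: "s^2 = 1/2" by (simp add: s_def power_divide)
  have s0: "s > 0" by (simp add: s_def)
  define a :: "real^3" where "a = vector [s*(w$3*w$1 - k*w$2)/r, s*(w$3*w$2 + k*w$1)/r, s]"
  define b :: "real^3" where "b = vector [s*(w$3*w$1 + k*w$2)/r, s*(w$3*w$2 - k*w$1)/r, s]"
  have q1: "(w$3*w$1 - k*w$2)^2 + (w$3*w$2 + k*w$1)^2 = r^2"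
  proof -
    have "(w$3*w$1 - k*w$2)^2 + (w$3*w$2 + k*w$1)^2 = (w$3^2 + k^2) * r"
      by (simp add: r_def algebra_simps power2_eq_square)
    thus ?thesis using kk by (simp add: power2_eq_square)
  qed
  have q2: "(w$3*w$1 + k*w$2)^2 + (w$3*w$2 - k*w$1)^2 = r^2"
  proof -
    have "(w$3*w$1 + k*w$2)^2 + (w$3*w$2 - k*w$1)^2 = (w$3^2 + k^2) * r"
      by (simp add: r_def algebra_simps power2_eq_square)
    thus ?thesis using kk by (simp add: power2_eq_square)
  qed
  have na: "a$1^2 + a$2^2 = s^2"
  proof -
    have "a$1^2 + a$2^2 = s^2 * ((w$3*w$1 - k*w$2)^2 + (w$3*w$2 + k*w$1)^2) / r^2"
      using r0 by (simp add: a_def field_simps power2_eq_square)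
    thus ?thesis using q1 r0 by simp
  qed
  have nb: "b$1^2 + b$2^2 = s^2"
  proof -
    have "b$1^2 + b$2^2 = s^2 * ((w$3*w$1 + k*w$2)^2 + (w$3*w$2 - k*w$1)^2) / r^2"
      using r0 by (simp add: b_def field_simps power2_eq_square)
    thus ?thesis using q2 r0 by simp
  qed
  have la: "lprod w a = 0"
  proof -
    have "lprod w a = s * (w$1*(w$3*w$1 - k*w$2) + w$2*(w$3*w$2 + k*w$1) - w$3 * r) / r"
      using r0 by (simp add: lprod_def a_def field_simps)
    also have "w$1*(w$3*w$1 - k*w$2) + w$2*(w$3*w$2 + k*w$1) - w$3 * r = 0"
      by (simp add: r_def algebra_simps power2_eq_square)
    finally show ?thesis by simp
  qed
  have lb: "lprod w b = 0"
  proof -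
    have "lprod w b = s * (w$1*(w$3*w$1 + k*w$2) + w$2*(w$3*w$2 - k*w$1) - w$3 * r) / r"
      using r0 by (simp add: lprod_def b_def field_simps)
    also have "w$1*(w$3*w$1 + k*w$2) + w$2*(w$3*w$2 - k*w$1) - w$3 * r = 0"
      by (simp add: r_def algebra_simps power2_eq_square)
    finally show ?thesis by simp
  qed
  have fa: "null_frame_cond w a" unfolding nfc_iff using na ss s0 la by (simp add: a_def)
  have fb: "null_frame_cond w b" unfolding nfc_iff using nb ss s0 lb by (simp add: b_def)
  have "trip a b w = s^2 * (2 * k * (r - w$3^2)) / r"
  proof -
    have "trip a b w = s^2 * (w$3 * ((w$3*w$1 - k*w$2)*(w$3*w$2 - k*w$1) - (w$3*w$2 + k*w$1)*(w$3*w$1 + k*w$2)) / r^2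
        + w$2 * ((w$3*w$1 + k*w$2) - (w$3*w$1 - k*w$2)) / r + w$1 * ((w$3*w$2 + k*w$1) - (w$3*w$2 - k*w$1))/r)"
      using r0 by (simp add: trip_def a_def b_def field_simps power2_eq_square)
    also have "\<dots> = s^2 * (- 2*k*w$3^2*r / r^2 + 2*k*w$2^2 / r + 2*k*w$1^2/r)"
    proof -
      have e1: "w$3 * ((w$3*w$1 - k*w$2)*(w$3*w$2 - k*w$1) - (w$3*w$2 + k*w$1)*(w$3*w$1 + k*w$2)) = -2*k*w$3^2*r"
        by (simp add: r_def algebra_simps power2_eq_square)
      have e2: "w$2 * ((w$3*w$1 + k*w$2) - (w$3*w$1 - k*w$2)) = 2*k*w$2^2" by (simp add: algebra_simps power2_eq_square)
      have e3: "w$1 * ((w$3*w$2 + k*w$1) - (w$3*w$2 - k*w$1)) = 2*k*w$1^2" by (simp add: algebra_simps power2_eq_square)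
      show ?thesis unfolding e1 e2 e3 ..
    qed
    also have "\<dots> = s^2 * (2 * k * (r - w$3^2)) / r"
    proof -
      have "- 2*k*w$3^2*r / r^2 + 2*k*w$2^2 / r + 2*k*w$1^2/r = (2*k*(w$1^2+w$2^2) - 2*k*w$3^2)/r"
        using r0 by (simp add: field_simps power2_eq_square)
      thus ?thesis by (simp add: r_def algebra_simps)
    qed
    finally show ?thesis .
  qed
  hence "trip a b w > 0" using s0 k0 sp r0 by simp
  thus ?thesis using fa fb pos_oriented_trip by blast
qed

lemma normid:
  assumes "lprod a w = 0" "lprod b w = 0" "lprod a a = 0" "lprod b b = 0"
    "lprod a b \<noteq> 0" "lprod w w \<noteq> 0" "trip a b w \<noteq> 0"
  shows "lprod x x = 2 * lprod x a * lprod x b / lprod a b + (lprod x w)^2 / lprod w w"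
proof -
  have "lprod x x = lprod x ((lprod x b / lprod a b) *\<^sub>R a + (lprod x a / lprod a b) *\<^sub>R b + (lprod x w / lprod w w) *\<^sub>R w)"
    using decomp[OF assms, of x] by simp
  also have "\<dots> = 2 * lprod x a * lprod x b / lprod a b + (lprod x w)^2 / lprod w w"
    by (simp add: field_simps power2_eq_square)
  finally show ?thesis .
qed

lemma nfc_facts: assumes "null_frame_cond w a" shows "lprod a w = 0" "lprod a a = 0" "lprod w a = 0"
  using assms by (auto simp: null_frame_cond_def is_null_def lprod_comm)

lemma at_most_two:
  assumes "spacelike w" "null_frame_cond w a" "null_frame_cond w b" "trip a b w \<noteq> 0" "null_frame_cond w z"
  shows "z = a \<or> z = b"
proof -
  have ab: "a \<noteq> b" using assms(4) trip_rep by auto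
  have N: "lprod a b \<noteq> 0" using fnull_lt[OF assms(2,3) ab] by simp
  have Q: "lprod w w \<noteq> 0" using assms(1) by (simp add: spacelike_def)
  have "lprod z z = 2 * lprod z a * lprod z b / lprod a b + (lprod z w)^2 / lprod w w"
    by (rule normid) (use nfc_facts[OF assms(2)] nfc_facts[OF assms(3)] N Q assms(4) in auto)
  hence "lprod z a * lprod z b = 0" using nfc_facts[OF assms(5)] N by simp
  thus ?thesis using fnull_eq[OF assms(5) assms(2)] fnull_eq[OF assms(5) assms(3)] by auto
qed

lemma frame_unique:
  assumes "spacelike w" "null_frame_cond w a" "null_frame_cond w b" "pos_oriented a b w"
    "null_frame_cond w a'" "null_frame_cond w b'" "pos_oriented a' b' w"
  shows "a' = a \<and> b' = b"
proof -
  have t: "trip a b w > 0" "trip a' b' w > 0" using assms(4,7) pos_oriented_trip by auto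
  have "a' = a \<or> a' = b" "b' = a \<or> b' = b"
    using at_most_two[OF assms(1-3) _ assms(5)] at_most_two[OF assms(1-3) _ assms(6)] t by auto
  moreover have "a' \<noteq> b'" using t trip_rep by auto
  moreover have "\<not> (a' = b \<and> b' = a)" using t trip_swap12[of b a w] by auto
  ultimately show ?thesis by auto
qed

lemma frame_char:
  assumes "spacelike w" "null_frame_cond w a" "null_frame_cond w b" "pos_oriented a b w"
  shows "vminus w = a \<and> vplus w = b"
proof -
  have "null_pair w = (a, b)"
    unfolding null_pair_def
  proof (rule the_equality)
    show "case (a, b) of (a, b) \<Rightarrow> null_frame_cond w a \<and> null_frame_cond w b \<and> pos_oriented a b w"
      using assms by simp
    fix x assume "case x of (a, b) \<Rightarrow> null_frame_cond w a \<and> null_frame_cond w b \<and> pos_oriented a b w"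
    then obtain a' b' where "x = (a', b')" "null_frame_cond w a'" "null_frame_cond w b'" "pos_oriented a' b' w"
      by (cases x) auto
    thus "x = (a, b)" using frame_unique[OF assms] by auto
  qed
  thus ?thesis by (simp add: vminus_def vplus_def)
qed

lemma frame:
  assumes "spacelike w"
  shows "null_frame_cond w (vminus w)" "null_frame_cond w (vplus w)" "pos_oriented (vminus w) (vplus w) w"
proof -
  obtain a b where "null_frame_cond w a" "null_frame_cond w b" "pos_oriented a b w"
    using frame_exists[OF assms] by blast
  with frame_char[OF assms this] show "null_frame_cond w (vminus w)" "null_frame_cond w (vplus w)" "pos_oriented (vminus w) (vplus w) w"
    by auto
qed

lemma fb:
  assumes "spacelike v"
  shows "lprod (vminus v) v = 0" "lprod (vplus v) v = 0" "lprod (vminus v) (vminus v) = 0"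
    "lprod (vplus v) (vplus v) = 0" "lprod (vminus v) (vplus v) < 0" "lprod v v > 0"
    "trip (vminus v) (vplus v) v > 0"
proof -
  note f = frame[OF assms]
  show "lprod (vminus v) v = 0" "lprod (vplus v) v = 0" "lprod (vminus v) (vminus v) = 0"
    "lprod (vplus v) (vplus v) = 0" using nfc_facts[OF f(1)] nfc_facts[OF f(2)] by auto
  show t: "trip (vminus v) (vplus v) v > 0" using f(3) pos_oriented_trip by auto
  hence "vminus v \<noteq> vplus v" using trip_rep by auto
  thus "lprod (vminus v) (vplus v) < 0" using fnull_lt[OF f(1,2)] by auto
  show "lprod v v > 0" using assms by (simp add: spacelike_def)
qed

lemma decv:
  assumes "spacelike v"
  shows "x = (lprod x (vplus v) / lprod (vminus v) (vplus v)) *\<^sub>R vminus v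
     + (lprod x (vminus v) / lprod (vminus v) (vplus v)) *\<^sub>R vplus v + (lprod x v / lprod v v) *\<^sub>R v"
  using fb[OF assms] by (intro decomp) auto

lemma normv:
  assumes "spacelike v"
  shows "lprod x x = 2 * lprod x (vminus v) * lprod x (vplus v) / lprod (vminus v) (vplus v) + (lprod x v)^2 / lprod v v"
  using fb[OF assms] by (intro normid) auto

lemma trip_dec3:
  assumes "spacelike v"
  shows "trip y z x = (lprod x (vplus v) / lprod (vminus v) (vplus v)) * trip y z (vminus v)
     + (lprod x (vminus v) / lprod (vminus v) (vplus v)) * trip y z (vplus v) + (lprod x v / lprod v v) * trip y z v"
  by (subst decv[OF assms, of x]) (simp only: trip_lin3)

lemma trip_dec1:
  assumes "spacelike v"
  shows "trip x y z = (lprod x (vplus v) / lprod (vminus v) (vplus v)) * trip (vminus v) y z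
     + (lprod x (vminus v) / lprod (vminus v) (vplus v)) * trip (vplus v) y z + (lprod x v / lprod v v) * trip v y z"
  by (subst decv[OF assms, of x]) (simp only: trip_lin1)

lemma nonneg_div_neg: "(a::real) \<le> 0 \<Longrightarrow> b < 0 \<Longrightarrow> a / b \<ge> 0"
  by (simp add: divide_nonpos_neg)



lemma sgn_help1: "(X::real) = g * T \<Longrightarrow> T = a * D \<Longrightarrow> a \<ge> 0 \<Longrightarrow> X > 0 \<Longrightarrow> D > 0 \<Longrightarrow> g > 0"
  by (metis mult_nonneg_nonneg mult_nonpos_nonneg linorder_not_le order.strict_iff_not)
lemma sgn_help2: "(X::real) = g * T \<Longrightarrow> T = - a * D \<Longrightarrow> a \<ge> 0 \<Longrightarrow> g > 0 \<Longrightarrow> D > 0 \<Longrightarrow> X \<le> 0"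
  by (simp add: mult_nonneg_nonneg)

lemma wing_plus:
  assumes "spacelike v"
  shows "x \<in> Pset (vplus v) \<longleftrightarrow> lprod x (vplus v) = 0 \<and> lprod x v > 0"
proof -
  let ?m = "vminus v" and ?n = "vplus v"
  note F = fb[OF assms] and fr = frame[OF assms]
  let ?N = "lprod ?m ?n" and ?Q = "lprod v v" and ?D = "trip ?m ?n v"
  show ?thesis
  proof
    assume x: "x \<in> Pset ?n"
    then obtain c where sx: "spacelike x" and xn: "lprod ?n x = 0" and c: "c > 0" "vplus x = c *\<^sub>R ?n"
      by (auto simp: Pset_def)
    note fx = frame[OF sx]
    have "norm (vplus x) = 1" "norm ?n = 1" using fx(2) fr(2) by (auto simp: null_frame_cond_def)
    hence "c = 1" using c by simp
    hence px: "vplus x = ?n" using c by simp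
    have t: "trip (vminus x) ?n x > 0" using fx(3) px pos_oriented_trip by auto
    have "trip (vminus x) ?n x = (lprod x v / ?Q) * trip (vminus x) ?n v"
      using trip_dec3[OF assms, of "vminus x" ?n x] xn trip_rep by (simp add: lprod_comm)
    moreover have "trip (vminus x) ?n v = (lprod (vminus x) ?n / ?N) * ?D"
      using trip_dec1[OF assms, of "vminus x" ?n v] trip_rep by simp
    moreover have "lprod (vminus x) ?n / ?N \<ge> 0"
      using fnull_le[OF fx(1) fr(2)] F(5) by (rule nonneg_div_neg)
    ultimately have "lprod x v / ?Q > 0" using t F(7) by (rule sgn_help1)
    thus "lprod x ?n = 0 \<and> lprod x v > 0" using F(6) xn by (simp add: lprod_comm zero_less_divide_iff)
  next
    assume h: "lprod x ?n = 0 \<and> lprod x v > 0"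
    have "lprod x x = (lprod x v)^2 / ?Q" using normv[OF assms, of x] h by simp
    hence sx: "spacelike x" using h F(6) by (simp add: spacelike_def)
    note fx = frame[OF sx]
    have nx: "null_frame_cond x ?n" using fr(2) h by (simp add: null_frame_cond_def lprod_comm)
    have "?n = vminus x \<or> ?n = vplus x"
      using at_most_two[OF sx fx(1,2) _ nx] fx(3) pos_oriented_trip by auto
    moreover have "?n \<noteq> vminus x"
    proof
      assume e: "?n = vminus x"
      have t: "trip ?n (vplus x) x > 0" using fx(3) e pos_oriented_trip by auto
      have "trip ?n (vplus x) x = (lprod x v / ?Q) * trip ?n (vplus x) v"
        using trip_dec3[OF assms, of ?n "vplus x" x] h trip_rep by simp
      moreover have "trip ?n (vplus x) v = - (lprod (vplus x) ?n / ?N) * ?D"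
        using trip_dec1[OF assms, of "vplus x" ?n v] trip_rep trip_swap12[of ?n "vplus x" v] by simp
      moreover have "lprod (vplus x) ?n / ?N \<ge> 0"
        using fnull_le[OF fx(2) fr(2)] F(5) by (rule nonneg_div_neg)
      moreover have "lprod x v / ?Q > 0" using h F(6) by simp
      ultimately have "trip ?n (vplus x) x \<le> 0" using F(7) by (rule sgn_help2)
      thus False using t by simp
    qed
    ultimately have "vplus x = 1 *\<^sub>R ?n" by simp
    thus "x \<in> Pset ?n" using sx h by (auto simp: Pset_def lprod_comm intro!: exI[of _ 1])
  qed
qed

lemma sgn_help3: "(X::real) = g * T \<Longrightarrow> T = - a * D \<Longrightarrow> a \<ge> 0 \<Longrightarrow> X > 0 \<Longrightarrow> D > 0 \<Longrightarrow> g < 0"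
proof (rule ccontr)
  assume h: "X = g * T" "T = - a * D" "a \<ge> 0" "X > 0" "D > 0" "\<not> g < 0"
  have "g * (a * D) \<ge> 0" using h by (simp add: mult_nonneg_nonneg)
  moreover have "X = - (g * (a * D))" using h(1,2) by simp
  ultimately show False using h(4) by linarith
qed
lemma sgn_help4: "(X::real) = g * T \<Longrightarrow> T = a * D \<Longrightarrow> a \<ge> 0 \<Longrightarrow> g < 0 \<Longrightarrow> D > 0 \<Longrightarrow> X \<le> 0"
  by (simp add: mult_nonpos_nonneg)

lemma wing_minus:
  assumes "spacelike v"
  shows "x \<in> Pset (vminus v) \<longleftrightarrow> lprod x (vminus v) = 0 \<and> lprod x v < 0"
proof -
  let ?m = "vminus v" and ?n = "vplus v"
  note F = fb[OF assms] and fr = frame[OF assms]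
  let ?N = "lprod ?m ?n" and ?Q = "lprod v v" and ?D = "trip ?m ?n v"
  have Dnm: "trip ?n ?m v = - ?D" using trip_swap12[of ?n ?m v] by simp
  show ?thesis
  proof
    assume x: "x \<in> Pset ?m"
    then obtain c where sx: "spacelike x" and xn: "lprod ?m x = 0" and c: "c > 0" "vplus x = c *\<^sub>R ?m"
      by (auto simp: Pset_def)
    note fx = frame[OF sx]
    have "norm (vplus x) = 1" "norm ?m = 1" using fx(2) fr(1) by (auto simp: null_frame_cond_def)
    hence "c = 1" using c by simp
    hence px: "vplus x = ?m" using c by simp
    have t: "trip (vminus x) ?m x > 0" using fx(3) px pos_oriented_trip by auto
    have "trip (vminus x) ?m x = (lprod x v / ?Q) * trip (vminus x) ?m v"
      using trip_dec3[OF assms, of "vminus x" ?m x] xn trip_rep by (simp add: lprod_comm)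
    moreover have "trip (vminus x) ?m v = - (lprod (vminus x) ?m / ?N) * ?D"
      using trip_dec1[OF assms, of "vminus x" ?m v] trip_rep Dnm by simp
    moreover have "lprod (vminus x) ?m / ?N \<ge> 0"
      using fnull_le[OF fx(1) fr(1)] F(5) by (rule nonneg_div_neg)
    ultimately have "lprod x v / ?Q < 0" using t F(7) by (rule sgn_help3)
    thus "lprod x ?m = 0 \<and> lprod x v < 0" using F(6) xn by (simp add: lprod_comm divide_less_0_iff)
  next
    assume h: "lprod x ?m = 0 \<and> lprod x v < 0"
    have "lprod x x = (lprod x v)^2 / ?Q" using normv[OF assms, of x] h by simp
    hence sx: "spacelike x" using h F(6) by (simp add: spacelike_def)
    note fx = frame[OF sx]
    have nx: "null_frame_cond x ?m" using fr(1) h by (simp add: null_frame_cond_def lprod_comm)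
    have "?m = vminus x \<or> ?m = vplus x"
      using at_most_two[OF sx fx(1,2) _ nx] fx(3) pos_oriented_trip by auto
    moreover have "?m \<noteq> vminus x"
    proof
      assume e: "?m = vminus x"
      have t: "trip ?m (vplus x) x > 0" using fx(3) e pos_oriented_trip by auto
      have "trip ?m (vplus x) x = (lprod x v / ?Q) * trip ?m (vplus x) v"
        using trip_dec3[OF assms, of ?m "vplus x" x] h trip_rep by simp
      moreover have "trip ?m (vplus x) v = (lprod (vplus x) ?m / ?N) * ?D"
        using trip_dec1[OF assms, of "vplus x" ?m v] trip_rep trip_swap12[of ?m "vplus x" v] Dnm by simp
      moreover have "lprod (vplus x) ?m / ?N \<ge> 0"
        using fnull_le[OF fx(2) fr(1)] F(5) by (rule nonneg_div_neg)
      moreover have "lprod x v / ?Q < 0" using h F(6) by (simp add: divide_less_0_iff)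
      ultimately have "trip ?m (vplus x) x \<le> 0" using F(7) by (rule sgn_help4)
      thus False using t by simp
    qed
    ultimately have "vplus x = 1 *\<^sub>R ?m" by simp
    thus "x \<in> Pset ?m" using sx h by (auto simp: Pset_def lprod_comm intro!: exI[of _ 1])
  qed
qed

definition cpchar :: "real^3 \<Rightarrow> real^3 \<Rightarrow> bool" where
  "cpchar v x \<longleftrightarrow> (lprod x (vplus v) = 0 \<and> lprod x v > 0) \<or> (lprod x (vminus v) = 0 \<and> lprod x v < 0)
     \<or> (lprod x v = 0 \<and> lprod x (vminus v) * lprod x (vplus v) \<ge> 0)"

lemma stem_char:
  assumes "spacelike v"
  shows "(lprod v x = 0 \<and> lprod x x \<le> 0) \<longleftrightarrow> (lprod x v = 0 \<and> lprod x (vminus v) * lprod x (vplus v) \<ge> 0)"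
proof -
  note F = fb[OF assms]
  let ?z = "lprod x (vminus v) * lprod x (vplus v)"
  have e: "lprod x v = 0 \<Longrightarrow> lprod x x = 2 * ?z / lprod (vminus v) (vplus v)"
    using normv[OF assms, of x] by simp
  have d: "(2 * z / lprod (vminus v) (vplus v) \<le> 0) \<longleftrightarrow> z \<ge> 0" for z
    using F(5) by (simp add: divide_le_0_iff)
  have c: "lprod v x = lprod x v" by (rule lprod_comm)
  show ?thesis
  proof
    assume h: "lprod v x = 0 \<and> lprod x x \<le> 0"
    hence "lprod x v = 0" using c by simp
    with h e d show "lprod x v = 0 \<and> ?z \<ge> 0" by metis
  next
    assume h: "lprod x v = 0 \<and> ?z \<ge> 0"
    with e d have "lprod x x \<le> 0" by metis
    thus "lprod v x = 0 \<and> lprod x x \<le> 0" using h c by simp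
  qed
qed

lemma transl_mem: "y \<in> (\<lambda>w. q + w) ` S \<longleftrightarrow> y - q \<in> (S :: (real^3) set)"
proof
  assume "y \<in> (\<lambda>w. q + w) ` S" then obtain x where "x \<in> S" "y = q + x" by auto
  thus "y - q \<in> S" by simp
next
  assume "y - q \<in> S" thus "y \<in> (\<lambda>w. q + w) ` S" by (intro image_eqI[of _ _ "y - q"]) auto
qed

lemma cp_char:
  assumes "spacelike v"
  shows "y \<in> crooked_plane v q \<longleftrightarrow> cpchar v (y - q)"
proof -
  have "y \<in> crooked_plane v q \<longleftrightarrow> (y - q) \<in> Pset (vplus v) \<or> (y - q) \<in> Pset (vminus v)
     \<or> (lprod v (y - q) = 0 \<and> lprod (y - q) (y - q) \<le> 0)"
    unfolding crooked_plane_def Un_iff transl_mem by simp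
  also have "\<dots> \<longleftrightarrow> cpchar v (y - q)"
    unfolding wing_plus[OF assms] wing_minus[OF assms] stem_char[OF assms] cpchar_def ..
  finally show ?thesis .
qed




lemma frame_neg:
  assumes "spacelike u" "c < 0"
  shows "vplus (c *\<^sub>R u) = vminus u" "vminus (c *\<^sub>R u) = vplus u"
proof -
  note fr = frame[OF assms(1)] and F = fb[OF assms(1)]
  have "c * c > 0" using assms(2) by (simp add: mult_neg_neg)
  hence s: "spacelike (c *\<^sub>R u)" using assms(1) by (simp add: spacelike_def mult.assoc[symmetric])
  have n: "null_frame_cond (c *\<^sub>R u) a \<longleftrightarrow> null_frame_cond u a" for a
    using assms(2) by (simp add: null_frame_cond_def)
  have "trip (vplus u) (vminus u) (c *\<^sub>R u) > 0"
    using F(7) assms(2) trip_swap12[of "vplus u" "vminus u" u] by (simp add: trip_scale3 mult_neg_pos)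
  hence "pos_oriented (vplus u) (vminus u) (c *\<^sub>R u)" by (simp add: pos_oriented_trip)
  with frame_char[OF s] fr n show "vplus (c *\<^sub>R u) = vminus u" "vminus (c *\<^sub>R u) = vplus u" by auto
qed

lemma hs_char:
  assumes "spacelike u"
  shows "y \<in> crooked_halfspace (- u) p \<longleftrightarrow>
    (lprod (y - p) u \<le> 0 \<longrightarrow> lprod (y - p) (vminus u) \<le> 0) \<and> (lprod (y - p) u \<ge> 0 \<longrightarrow> lprod (y - p) (vplus u) \<ge> 0)"
proof -
  have "- u = (-1::real) *\<^sub>R u" by simp
  hence "vplus (- u) = vminus u" "vminus (- u) = vplus u" using frame_neg[OF assms, of "-1"] by auto
  thus ?thesis unfolding crooked_halfspace_def by auto
qed

definition med :: "real \<Rightarrow> real \<Rightarrow> real \<Rightarrow> real" where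
  "med x y z = max (min x y) (min (max x y) z)"

definition fside :: "real \<Rightarrow> real \<Rightarrow> real \<Rightarrow> real" where
  "fside P M S = med (- P) (max M 0 + max S 0) (min M 0 - max S 0)
     + med M (max (- P) 0 + max (- S) 0) (min (- P) 0 - max (- S) 0) - med (- P) M 0"

lemma med_mm: "med x (max y 0) (min y 0) = med x y 0" unfolding med_def by (auto simp: max_def min_def)
lemma med_sym: "med x y 0 = med y x 0" unfolding med_def by (auto simp: max_def min_def)
lemma med_sgn: "c > 0 \<Longrightarrow> d < 0 \<Longrightarrow> (med x c d > 0 \<longleftrightarrow> x > 0) \<and> (med x c d < 0 \<longleftrightarrow> x < 0)"
  unfolding med_def by (auto simp: max_def min_def)
lemma med_0: "(med x y 0 > 0 \<longleftrightarrow> x > 0 \<and> y > 0) \<and> (med x y 0 < 0 \<longleftrightarrow> x < 0 \<and> y < 0)"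
  unfolding med_def by (auto simp: max_def min_def)

lemma fside_pos: "S > 0 \<Longrightarrow> fside P M S = med (- P) (max M 0 + S) (min M 0 - S)"
  unfolding fside_def by (simp add: med_mm med_sym[of M])
lemma fside_neg: "S < 0 \<Longrightarrow> fside P M S = med M (max (-P) 0 - S) (min (-P) 0 + S)"
  unfolding fside_def by (simp add: med_mm)
lemma fside_0: "fside P M 0 = med (- P) M 0"
  unfolding fside_def by (simp add: med_mm med_sym[of M])

lemma fside_sign:
  "(fside P M S > 0 \<longleftrightarrow> (S > 0 \<and> P < 0) \<or> (S < 0 \<and> M > 0) \<or> (S = 0 \<and> P < 0 \<and> M > 0))
   \<and> (fside P M S < 0 \<longleftrightarrow> (S > 0 \<and> P > 0) \<or> (S < 0 \<and> M < 0) \<or> (S = 0 \<and> P > 0 \<and> M < 0))"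
proof -
  consider "S > 0" | "S < 0" | "S = 0" by linarith
  thus ?thesis
  proof cases
    case 1
    have "max M 0 + S > 0" "min M 0 - S < 0" using 1 by auto
    from med_sgn[OF this, of "-P"] show ?thesis using 1 fside_pos[OF 1] by auto
  next
    case 2
    have "max (-P) 0 - S > 0" "min (-P) 0 + S < 0" using 2 by auto
    from med_sgn[OF this, of "M"] show ?thesis using 2 fside_neg[OF 2] by auto
  next
    case 3 thus ?thesis using fside_0 med_0[of "-P" M] by auto
  qed
qed

lemma fside_bad:
  assumes "\<not> ((P = 0 \<and> S > 0) \<or> (M = 0 \<and> S < 0) \<or> (S = 0 \<and> M * P \<ge> 0))"
    "\<not> ((S \<le> 0 \<longrightarrow> M \<le> 0) \<and> (S \<ge> 0 \<longrightarrow> P \<ge> 0))"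
  shows "fside P M S > 0"
proof -
  consider "S > 0" | "S < 0" | "S = 0" by linarith
  hence "(S > 0 \<and> P < 0) \<or> (S < 0 \<and> M > 0) \<or> (S = 0 \<and> P < 0 \<and> M > 0)"
  proof cases
    case 1 thus ?thesis using assms by auto
  next
    case 2 thus ?thesis using assms by auto
  next
    case 3
    hence "M * P < 0" "M > 0 \<or> P < 0" using assms by auto
    hence "P < 0 \<and> M > 0" by (auto simp: mult_less_0_iff)
    thus ?thesis using 3 by simp
  qed
  thus ?thesis using fside_sign by blast
qed

lemma fside_good:
  assumes "(S > 0 \<and> P > 0) \<or> (S < 0 \<and> M < 0) \<or> (S = 0 \<and> P > 0 \<and> M < 0)"
  shows "fside P M S < 0"
  using assms fside_sign by blast

lemma fside_zero:
  assumes "fside P M S = 0"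
  shows "(P = 0 \<and> S > 0) \<or> (M = 0 \<and> S < 0) \<or> (S = 0 \<and> M * P \<ge> 0)"
proof (rule ccontr)
  assume n: "\<not> ?thesis"
  have a: "\<not> fside P M S > 0" "\<not> fside P M S < 0" using assms by auto
  consider "S > 0" | "S < 0" | "S = 0" by linarith
  thus False
  proof cases
    case 1 thus False using n a fside_sign[of P M S] by auto
  next
    case 2 thus False using n a fside_sign[of P M S] by auto
  next
    case 3
    hence "M * P < 0" using n by auto
    hence "P < 0 \<and> M > 0 \<or> P > 0 \<and> M < 0" by (auto simp: mult_less_0_iff)
    thus False using 3 a fside_sign[of P M S] by auto
  qed
qed

lemma cont_lprod[continuous_intros]: "continuous_on S (\<lambda>z. lprod z c)"
  unfolding lprod_def by (intro continuous_intros)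

lemma cont_fside: "continuous_on S (\<lambda>z. fside (lprod z a) (lprod z b) (lprod z c))"
  unfolding fside_def med_def by (intro continuous_intros)




lemma convex3: "convex {x. lprod x a = 0 \<and> 0 \<le> lprod x b \<and> 0 \<le> lprod x c}"
  by (rule convexI) (auto intro!: add_nonneg_nonneg mult_nonneg_nonneg)

lemma cp_connected:
  assumes "spacelike v"
  shows "connected {x. cpchar v x}"
proof -
  let ?m = "vminus v" and ?n = "vplus v"
  define K1 where "K1 = {x. lprod x ?n = 0 \<and> 0 \<le> lprod x v \<and> 0 \<le> lprod x v}"
  define K2 where "K2 = {x. lprod x ?m = 0 \<and> 0 \<le> lprod x (-v) \<and> 0 \<le> lprod x (-v)}"
  define S1 where "S1 = {x. lprod x v = 0 \<and> 0 \<le> lprod x ?m \<and> 0 \<le> lprod x ?n}"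
  define S2 where "S2 = {x. lprod x v = 0 \<and> 0 \<le> lprod x (- ?m) \<and> 0 \<le> lprod x (- ?n)}"
  have e: "{x. cpchar v x} = K1 \<union> K2 \<union> S1 \<union> S2"
  proof (intro set_eqI iffI)
    fix x assume "x \<in> {x. cpchar v x}"
    hence "cpchar v x" by simp
    thus "x \<in> K1 \<union> K2 \<union> S1 \<union> S2" unfolding cpchar_def K1_def K2_def S1_def S2_def
      by (auto simp: zero_le_mult_iff)
  next
    fix x assume "x \<in> K1 \<union> K2 \<union> S1 \<union> S2"
    thus "x \<in> {x. cpchar v x}" unfolding cpchar_def K1_def K2_def S1_def S2_def
      by (auto simp: zero_le_mult_iff)
  qed
  have c: "connected K1" "connected K2" "connected S1" "connected S2"
    unfolding K1_def K2_def S1_def S2_def by (intro convex_connected convex3)+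
  have z: "0 \<in> K1" "0 \<in> K2" "0 \<in> S1" "0 \<in> S2" unfolding K1_def K2_def S1_def S2_def by auto
  have "connected (K1 \<union> K2)" using c z by (intro connected_Un) auto
  hence "connected (K1 \<union> K2 \<union> S1)" using c z by (intro connected_Un) auto
  hence "connected (K1 \<union> K2 \<union> S1 \<union> S2)" using c z by (intro connected_Un) auto
  thus ?thesis using e by simp
qed

lemma big: assumes "(a::real) > 0" "c > 0" shows "\<exists>t>0. b < t * a \<and> d < t * c"
proof -
  define t where "t = 1 + \<bar>b\<bar> / a + \<bar>d\<bar> / c"
  have t0: "t > 0" using assms by (simp add: t_def add_pos_nonneg)
  have "t * a = a + \<bar>b\<bar> + \<bar>d\<bar> / c * a" using assms by (simp add: t_def algebra_simps)
  moreover have "\<bar>d\<bar> / c * a \<ge> 0" using assms by simp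
  ultimately have 1: "b < t * a" using assms by linarith
  have "t * c = c + \<bar>b\<bar> / a * c + \<bar>d\<bar>" using assms by (simp add: t_def algebra_simps)
  moreover have "\<bar>b\<bar> / a * c \<ge> 0" using assms by simp
  ultimately have 2: "d < t * c" using assms by linarith
  show ?thesis using t0 1 2 by blast
qed




definition good :: "real \<Rightarrow> real \<Rightarrow> real \<Rightarrow> bool" where
  "good P M S \<longleftrightarrow> (S > 0 \<and> P > 0) \<or> (S < 0 \<and> M < 0) \<or> (S = 0 \<and> P > 0 \<and> M < 0)"

lemma good_point:
  assumes su: "spacelike u" and sv: "spacelike v"
    and Pv: "lprod v (vplus u) \<le> 0" and Mv: "lprod v (vminus u) \<le> 0" and Sv: "lprod v u < 0"
    and disj: "\<And>z. \<not> (cpchar u z \<and> cpchar v (z - w))"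
  shows "\<exists>g. cpchar v (g - w) \<and> good (lprod g (vplus u)) (lprod g (vminus u)) (lprod g u)"
proof -
  let ?mu = "vminus u" and ?nu = "vplus u"
  note Fu = fb[OF su] and Fv = fb[OF sv]
  have vnv: "lprod v (vplus v) = 0" "lprod v (vminus v) = 0" using Fv by (auto simp: lprod_comm)
  consider "lprod v ?mu < 0" | "lprod v ?nu < 0" | "lprod v ?mu = 0 \<and> lprod v ?nu = 0"
    using Pv Mv by linarith
  thus ?thesis
  proof cases
    case 1
    obtain t where t: "t > 0" "lprod w u < t * (- lprod v u)" "lprod w ?mu < t * (- lprod v ?mu)"
      using big[of "- lprod v u" "- lprod v ?mu"] Sv 1 by auto
    let ?g = "w + t *\<^sub>R v"
    have "cpchar v (?g - w)" unfolding cpchar_def using t Fv vnv by (simp add: mult_pos_pos)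
    moreover have "good (lprod ?g ?nu) (lprod ?g ?mu) (lprod ?g u)" unfolding good_def using t by simp
    ultimately show ?thesis by blast
  next
    case 2
    obtain t where t: "t > 0" "- lprod w u < t * (- lprod v u)" "- lprod w ?nu < t * (- lprod v ?nu)"
      using big[of "- lprod v u" "- lprod v ?nu" "- lprod w u" "- lprod w ?nu"] Sv 2 by auto
    let ?g = "w - t *\<^sub>R v"
    have "cpchar v (?g - w)" unfolding cpchar_def using t Fv vnv by (simp add: mult_pos_pos)
    moreover have "good (lprod ?g ?nu) (lprod ?g ?mu) (lprod ?g u)" unfolding good_def using t by simp
    ultimately show ?thesis by blast
  next
    case 3
    let ?N = "lprod ?mu ?nu" and ?Q = "lprod u u"
    define c where "c = lprod v u / ?Q"
    have c0: "c < 0" using Sv Fu by (simp add: c_def divide_neg_pos)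
    have vc: "v = c *\<^sub>R u" using decv[OF su, of v] 3 by (simp add: c_def lprod_comm)
    have pv: "vplus v = ?mu" "vminus v = ?nu" using frame_neg[OF su c0] vc by auto
    have lv: "lprod x v = c * lprod x u" for x using vc by simp
    have cpv: "cpchar v x \<longleftrightarrow> (lprod x ?mu = 0 \<and> c * lprod x u > 0) \<or> (lprod x ?nu = 0 \<and> c * lprod x u < 0)
        \<or> (c * lprod x u = 0 \<and> lprod x ?nu * lprod x ?mu \<ge> 0)" for x
      unfolding cpchar_def pv lv ..
    have umu: "lprod ?mu u = 0" "lprod ?nu u = 0" "lprod ?mu ?mu = 0" "lprod ?nu ?nu = 0" using Fu by auto
    have nmn: "lprod ?nu ?mu = ?N" by (simp add: lprod_comm)
    consider "lprod w u > 0" | "lprod w u < 0" | "lprod w u = 0" by linarith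
    thus ?thesis
    proof cases
      case 1
      obtain t where t: "t > 0" "- lprod w ?nu < t * (- ?N)" "0 < t * 1"
        using big[of "- ?N" 1 "- lprod w ?nu" 0] Fu by auto
      let ?g = "w - t *\<^sub>R ?mu"
      have "cpchar v (?g - w)" unfolding cpv using umu by simp
      moreover have "good (lprod ?g ?nu) (lprod ?g ?mu) (lprod ?g u)" unfolding good_def using t 1 umu by simp
      ultimately show ?thesis by blast
    next
      case 2
      obtain t where t: "t > 0" "lprod w ?mu < t * (- ?N)" "0 < t * 1"
        using big[of "- ?N" 1 "lprod w ?mu" 0] Fu by auto
      let ?g = "w + t *\<^sub>R ?nu"
      have "cpchar v (?g - w)" unfolding cpv using umu by simp
      moreover have "good (lprod ?g ?nu) (lprod ?g ?mu) (lprod ?g u)" unfolding good_def using t 2 umu nmn by simp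
      ultimately show ?thesis by blast
    next
      case 3
      have wd: "w = (lprod w ?nu / ?N) *\<^sub>R ?mu + (lprod w ?mu / ?N) *\<^sub>R ?nu"
        using decv[OF su, of w] 3 by simp
      define z where "z = (lprod w ?nu / ?N) *\<^sub>R ?mu"
      have zw: "z - w = - ((lprod w ?mu / ?N) *\<^sub>R ?nu)" unfolding z_def by (subst (2) wd) simp
      have "cpchar u z" unfolding cpchar_def z_def using umu by simp
      moreover have "cpchar v (z - w)" unfolding cpv zw using umu by simp
      ultimately show ?thesis using disj by blast
    qed
  qed
qed



theorem lemma4p2:
  fixes u v p w :: "real^3"
  assumes "consistently_oriented [u, v]"
    and "crooked_plane u p \<inter> crooked_plane v (p + w) = {}"
  shows "crooked_plane v (p + w) \<subseteq> crooked_halfspace (- u) p"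
proof
  have su: "spacelike u" and sv: "spacelike v" using assms(1) by (auto simp: consistently_oriented_def)
  have co: "lprod v u < 0 \<and> lprod v (vplus u) \<le> 0 \<and> lprod v (vminus u) \<le> 0"
  proof -
    have A: "\<forall>i<length [u, v]. \<forall>j<length [u, v]. i \<noteq> j \<longrightarrow> lprod ([u,v]!i) ([u,v]!j) < 0
       \<and> lprod ([u,v]!i) (vplus ([u,v]!j)) \<le> 0 \<and> lprod ([u,v]!i) (vminus ([u,v]!j)) \<le> 0"
      using assms(1) unfolding consistently_oriented_def by blast
    have "lprod ([u,v]!1) ([u,v]!0) < 0 \<and> lprod ([u,v]!1) (vplus ([u,v]!0)) \<le> 0 \<and> lprod ([u,v]!1) (vminus ([u,v]!0)) \<le> 0"
      using A[rule_format, of 1 0] by simp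
    thus ?thesis by simp
  qed
  let ?mu = "vminus u" and ?nu = "vplus u"
  have disj: "\<not> (cpchar u z \<and> cpchar v (z - w))" for z
  proof
    assume h: "cpchar u z \<and> cpchar v (z - w)"
    have "p + z \<in> crooked_plane u p" using h cp_char[OF su, of "p + z" p] by simp
    moreover have "p + z \<in> crooked_plane v (p + w)" using h cp_char[OF sv, of "p + z" "p + w"] by simp
    ultimately show False using assms(2) by blast
  qed
  define F where "F z = fside (lprod z ?nu) (lprod z ?mu) (lprod z u)" for z
  define K where "K = {z. cpchar v (z - w)}"
  have Kc: "connected K"
  proof -
    have e: "K = (\<lambda>x. w + x) ` {x. cpchar v x}"
      by (rule set_eqI) (simp only: K_def transl_mem mem_Collect_eq)
    have "continuous_on {x. cpchar v x} (\<lambda>x. w + x)" by (intro continuous_intros)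
    from connected_continuous_image[OF this cp_connected[OF sv]] show ?thesis unfolding e .
  qed
  have Fc: "continuous_on K F" unfolding F_def by (rule cont_fside)
  obtain g where g: "g \<in> K" "F g < 0"
    using good_point[OF su sv _ _ _ disj] co fside_good unfolding K_def F_def good_def by blast
  fix y assume y: "y \<in> crooked_plane v (p + w)"
  show "y \<in> crooked_halfspace (- u) p"
  proof (rule ccontr)
    assume ny: "y \<notin> crooked_halfspace (- u) p"
    let ?z = "y - p"
    have zK: "?z \<in> K" using y cp_char[OF sv, of y "p + w"] unfolding K_def by (simp add: algebra_simps)
    have "\<not> cpchar u ?z" using disj zK unfolding K_def by blast
    hence "F ?z > 0" using ny hs_char[OF su, of y p] unfolding F_def cpchar_def
      by (intro fside_bad) auto
    have "connected (F ` K)" using Fc Kc by (rule connected_continuous_image)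
    hence "{F g .. F ?z} \<subseteq> F ` K" using g zK by (intro connected_contains_Icc) auto
    moreover have "0 \<in> {F g .. F ?z}" using g \<open>F ?z > 0\<close> by simp
    ultimately obtain z where z: "z \<in> K" "F z = 0" by auto
    hence "cpchar u z" using fside_zero[of "lprod z ?nu" "lprod z ?mu" "lprod z u"] unfolding F_def cpchar_def by auto
    thus False using disj z unfolding K_def by blast
  qed
qed


end
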